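(* Consider the remote-estimation model described in the context, and let the sensor use the always-transmit policy ($A_t = 1$ for all $t\ge 1$). Then the resulting Markov chain $\{S_t\}_{t\geq 1}$ on the state space $\mathcal{S}$ is irreducible and positive recurrent. Moreover, for every pair of states $s, s'\in\mathcal{S}$, the expected first passage time from $s$ to $s'$ is finite.
   Context: Model. A source $\{X_t\}_{t\ge1}$ is a homogeneous discrete-time Markov chain on $\mathcal{X}=\{1,\dots,M\}$ with irreducible transition matrix $Q=(Q_{i,j})$, $Q_{i,j}=\Pr[X_{t+1}=j\mid X_t=i]$. Let $\mathcal{X}_{\rm ap}=\{i: Q_{i,i}>0\}$ and $\mathcal{X}_{\rm p}=\mathcal{X}\setminus\mathcal{X}_{\rm ap}$; it is assumed $\mathcal{X}_{\rm ap}\neq\emptyset$. At each time $t$ a sensor chooses $A_t\in\{0,1\}$ (1 = transmit). The channel is an i.i.d. Bernoulli process $H_t$ with $\Pr[H_t=1]=p_s$, $\Pr[H_t=0]=p_f=1-p_s$, independent of the source. The receiver's estimate evolves as $\hat X_{t+1}=X_t$ if $A_t=1$ and $H_t=1$, and $\hat X_{t+1}=\hat X_t$ otherwise. The Age of Consecutive Error (AoCE) is $\Delta_t=\Delta_{t-1}+1$ if $X_t\ne\hat X_t$ and $(X_t,\hat X_t)=(X_{t-1},\hat X_{t-1})$; $\Delta_t=1$ if $X_t\neq \hat X_t$ and $(X_t,\hat X_t)\ne(X_{t-1},\hat X_{t-1})$; $\Delta_t=0$ if $X_t=\hat X_t$. The system state is $S_t=(X_t,\hat X_t,\Delta_t)$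 with state space $\mathcal{S}=\{(i,i,0):i\in\mathcal{X}\}\cup\{(i,j,\delta): i\ne j, i\in\mathcal{X}_{\rm ap},\delta\ge1\}\cup\{(i,j,1): i\neq j, i\in\mathcal{X}_{\rm p}\}$. Transition probabilities $P_{s,s'}(a)=\Pr[S_{t+1}=s'\mid S_t=s,A_t=a]$: for $s=(i,j,\delta)$, $i\ne j$, under $a=0$: to $(i,j,\delta+1)$ w.p. $Q_{i,i}$, to $(j,j,0)$ w.p. $Q_{i,j}$, to $(k,j,1)$ w.p. $Q_{i,k}$ for $k\ne i,j$; under $a=1$: to $(i,i,0)$ w.p. $Q_{i,i}p_s$, to $(k,i,1)$ w.p. $Q_{i,k}p_s$ for $k\ne i$, to $(i,j,\delta+1)$ w.p. $Q_{i,i}p_f$, to $(j,j,0)$ w.p. $Q_{i,j}p_f$, to $(k,j,1)$ w.p. $Q_{i,k}p_f$ for $k\ne i,j$. For $s=(i,i,0)$ and either action: to $(i,i,0)$ w.p. $Q_{i,i}$ and to $(k,i,1)$ w.p. $Q_{i,k}$ for $k\ne i$. *)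

theory Defs
  imports "HOL-Analysis.Analysis"
begin

fun nstep :: "('a \<Rightarrow> 'a \<Rightarrow> real) \<Rightarrow> 'a set \<Rightarrow> nat \<Rightarrow> 'a \<Rightarrow> 'a \<Rightarrow> real" where
  "nstep P S 0 s s' = (if s = s' then 1 else 0)"
| "nstep P S (Suc n) s s' = (\<Sum>\<^sub>\<infinity>k\<in>S. P s k * nstep P S n k s')"

definition irreducible_on :: "('a \<Rightarrow> 'a \<Rightarrow> real) \<Rightarrow> 'a set \<Rightarrow> bool" where
  "irreducible_on P S \<longleftrightarrow> (\<forall>s\<in>S. \<forall>s'\<in>S. \<exists>n. nstep P S n s s' > 0)"

text \<open>first_passage P S n s s' = Pr[first visit to s' at time n (n \<ge> 1) | start in s]\<close>
fun first_passage :: "('a \<Rightarrow> 'a \<Rightarrow> real) \<Rightarrow> 'a set \<Rightarrow> nat \<Rightarrow> 'a \<Rightarrow> 'a \<Rightarrow> real" where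
  "first_passage P S 0 s s' = 0"
| "first_passage P S (Suc 0) s s' = P s s'"
| "first_passage P S (Suc (Suc n)) s s' =
     (\<Sum>\<^sub>\<infinity>k\<in>S - {s'}. P s k * first_passage P S (Suc n) k s')"

definition hitting_prob :: "('a \<Rightarrow> 'a \<Rightarrow> real) \<Rightarrow> 'a set \<Rightarrow> 'a \<Rightarrow> 'a \<Rightarrow> ennreal" where
  "hitting_prob P S s s' = (\<Sum>n. ennreal (first_passage P S n s s'))"

text \<open>Expected first passage time E[tau_{s'} | S_1 = s], tau_{s'} = min{n \<ge> 1 : visit s'}
  (infinite if tau is infinite with positive probability).\<close>
definition expected_passage_time :: "('a \<Rightarrow> 'a \<Rightarrow> real) \<Rightarrow> 'a set \<Rightarrow> 'a \<Rightarrow> 'a \<Rightarrow> ennreal" where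
  "expected_passage_time P S s s' =
     (\<Sum>n. ennreal (real n * first_passage P S n s s'))
     + (if hitting_prob P S s s' = 1 then 0 else top)"

definition positive_recurrent_state :: "('a \<Rightarrow> 'a \<Rightarrow> real) \<Rightarrow> 'a set \<Rightarrow> 'a \<Rightarrow> bool" where
  "positive_recurrent_state P S s \<longleftrightarrow>
     hitting_prob P S s s = 1 \<and> expected_passage_time P S s s < top"

definition positive_recurrent_on :: "('a \<Rightarrow> 'a \<Rightarrow> real) \<Rightarrow> 'a set \<Rightarrow> bool" where
  "positive_recurrent_on P S \<longleftrightarrow> (\<forall>s\<in>S. positive_recurrent_state P S s)"

definition src :: "nat \<Rightarrow> nat set" where "src M = {1..M}"

definition stochastic_on :: "(nat \<Rightarrow> nat \<Rightarrow> real) \<Rightarrow> nat set \<Rightarrow> bool" where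
  "stochastic_on Q X \<longleftrightarrow> (\<forall>i\<in>X. (\<forall>j\<in>X. Q i j \<ge> 0) \<and> (\<Sum>j\<in>X. Q i j) = 1)"

definition X_ap :: "nat \<Rightarrow> (nat \<Rightarrow> nat \<Rightarrow> real) \<Rightarrow> nat set" where
  "X_ap M Q = {i \<in> src M. Q i i > 0}"

definition X_p :: "nat \<Rightarrow> (nat \<Rightarrow> nat \<Rightarrow> real) \<Rightarrow> nat set" where
  "X_p M Q = src M - X_ap M Q"

text \<open>States (X_t, Xhat_t, Delta_t).\<close>
type_synonym state = "nat \<times> nat \<times> nat"

definition state_space :: "nat \<Rightarrow> (nat \<Rightarrow> nat \<Rightarrow> real) \<Rightarrow> state set" where
  "state_space M Q =
     {(i, i, 0) | i. i \<in> src M}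
   \<union> {(i, j, d) | i j d. i \<noteq> j \<and> i \<in> X_ap M Q \<and> j \<in> src M \<and> d \<ge> 1}
   \<union> {(i, j, 1) | i j. i \<noteq> j \<and> i \<in> X_p M Q \<and> j \<in> src M}"

text \<open>Transition probabilities P_{s,s'}(a); ps = success probability, pf = 1 - ps.\<close>
fun trans :: "(nat \<Rightarrow> nat \<Rightarrow> real) \<Rightarrow> real \<Rightarrow> nat \<Rightarrow> state \<Rightarrow> state \<Rightarrow> real" where
  "trans Q ps a (i, j, d) (i', j', d') =
     (if i = j then
        (if (i', j', d') = (i, i, 0) then Q i i else 0)
      + (if j' = i \<and> d' = 1 \<and> i' \<noteq> i then Q i i' else 0)
      else if a = 0 then
        (if (i', j', d') = (i, j, d + 1) then Q i i else 0)
      + (if (i', j', d') = (j, j, 0) then Q i j else 0)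
      + (if j' = j \<and> d' = 1 \<and> i' \<noteq> i \<and> i' \<noteq> j then Q i i' else 0)
      else
        (if (i', j', d') = (i, i, 0) then Q i i * ps else 0)
      + (if j' = i \<and> d' = 1 \<and> i' \<noteq> i then Q i i' * ps else 0)
      + (if (i', j', d') = (i, j, d + 1) then Q i i * (1 - ps) else 0)
      + (if (i', j', d') = (j, j, 0) then Q i j * (1 - ps) else 0)
      + (if j' = j \<and> d' = 1 \<and> i' \<noteq> i \<and> i' \<noteq> j then Q i i' * (1 - ps) else 0))"

abbreviation trans_always :: "(nat \<Rightarrow> nat \<Rightarrow> real) \<Rightarrow> real \<Rightarrow> state \<Rightarrow> state \<Rightarrow> real" where
  "trans_always Q ps \<equiv> trans Q ps 1"

end

theory Submission
  imports Defs
begin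


definition ss :: "nat \<Rightarrow> nat \<Rightarrow> state" where
  "ss i x = (if x = i then (i,i,0) else (x,i,1))"
definition sf :: "nat \<Rightarrow> nat \<Rightarrow> nat \<Rightarrow> nat \<Rightarrow> state" where
  "sf i j d x = (if x = i then (i,j,Suc d) else if x = j then (j,j,0) else (x,j,1))"
definition w :: "real \<Rightarrow> state \<Rightarrow> nat \<Rightarrow> state \<Rightarrow> real" where
  "w ps s x k = (case s of (i,j,d) \<Rightarrow> if i = j then (if k = ss i x then 1 else 0)
     else (if k = ss i x then ps else 0) + (if k = sf i j d x then 1 - ps else 0))"

lemma fst_ss[simp]: "fst (ss i x) = x" by (simp add: ss_def)
lemma fst_sf[simp]: "fst (sf i j d x) = x" by (simp add: sf_def)

lemma P_eq: "trans Q ps 1 s k = Q (fst s) (fst k) * w ps s (fst k) k"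
proof -
  obtain i j d where s: "s = (i,j,d)" by (cases s) auto
  obtain a b c where k: "k = (a,b,c)" by (cases k) auto
  show ?thesis
  proof (cases "i = j")
    case True
    then show ?thesis unfolding s k by (cases "a = i") (simp_all add: w_def ss_def)
  next
    case False
    show ?thesis
    proof (cases "a = i")
      case True
      then show ?thesis unfolding s k using False by (simp add: w_def ss_def sf_def distrib_left)
    next
      case ai: False
      show ?thesis
      proof (cases "a = j")
        case True
        then show ?thesis unfolding s k using False ai by (simp add: w_def ss_def sf_def distrib_left)
      next
        case aj: False
        then show ?thesis unfolding s k using False ai by (simp add: w_def ss_def sf_def distrib_left)
      qed
    qed
  qed
qed

lemmas P_eq' = P_eq[unfolded One_nat_def]

lemma w_zero: "x \<noteq> fst k \<Longrightarrow> w ps s x k = 0"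
  by (cases s) (auto simp: w_def)

lemma P_sum: "finite A \<Longrightarrow> fst k \<in> A \<Longrightarrow> trans Q ps 1 s k = (\<Sum>x\<in>A. Q (fst s) x * w ps s x k)"
proof -
  assume A: "finite A" "fst k \<in> A"
  have "(\<Sum>x\<in>A. Q (fst s) x * w ps s x k) = Q (fst s) (fst k) * w ps s (fst k) k"
    using A by (subst sum.remove[of A "fst k"]) (auto simp: w_zero)
  then show ?thesis using P_eq[of Q ps s k] by simp
qed

locale mc =
  fixes M :: nat and Q :: "nat \<Rightarrow> nat \<Rightarrow> real" and ps :: real
  assumes M1: "M \<ge> 1" and sto: "stochastic_on Q (src M)" and irr: "irreducible_on Q (src M)"
    and ap: "X_ap M Q \<noteq> {}" and ps0: "0 < ps" and ps1: "ps < 1"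
begin

abbreviation S where "S \<equiv> state_space M Q"
abbreviation P where "P \<equiv> trans_always Q ps"

lemma mem_diag: "(i,i,d) \<in> S \<longleftrightarrow> i \<in> src M \<and> d = 0"
  by (auto simp: state_space_def X_ap_def X_p_def)

lemma mem_off: "i \<noteq> j \<Longrightarrow> (i,j,d) \<in> S \<longleftrightarrow> i \<in> src M \<and> j \<in> src M \<and> d \<ge> 1 \<and> (Q i i > 0 \<or> d = 1)"
  by (auto simp: state_space_def X_ap_def X_p_def)

lemma memS: "s \<in> S \<Longrightarrow> fst s \<in> src M \<and> fst (snd s) \<in> src M"
  by (auto simp: state_space_def X_ap_def X_p_def)

lemma Qnn: "i \<in> src M \<Longrightarrow> j \<in> src M \<Longrightarrow> Q i j \<ge> 0"
  using sto by (auto simp: stochastic_on_def)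

lemma Qsum: "i \<in> src M \<Longrightarrow> (\<Sum>j\<in>src M. Q i j) = 1"
  using sto by (auto simp: stochastic_on_def)

lemma fin_src[simp]: "finite (src M)" by (simp add: src_def)

lemma w_nn: "w ps s x k \<ge> 0"
  using ps0 ps1 by (cases s) (auto simp: w_def)

lemma P_nn: "s \<in> S \<Longrightarrow> k \<in> S \<Longrightarrow> P s k \<ge> 0"
  using memS[of s] memS[of k] by (simp add: P_eq' Qnn w_nn)

definition H :: "state \<Rightarrow> state set" where
  "H s = (case s of (i,j,d) \<Rightarrow> ss i ` src M \<union> sf i j d ` src M)"

lemma finH: "finite (H s)"
  by (cases s) (auto simp: H_def)

lemma P_out: "k \<notin> H s \<Longrightarrow> fst k \<in> src M \<Longrightarrow> P s k = 0"
proof -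
  assume k: "k \<notin> H s" "fst k \<in> src M"
  obtain i j d where s: "s = (i,j,d)" by (cases s) auto
  have "k \<noteq> ss i (fst k)" "k \<noteq> sf i j d (fst k)" using k s by (auto simp: H_def)
  then show ?thesis unfolding s by (auto simp: P_eq' w_def)
qed

lemma infsum_red:
  assumes "A \<subseteq> S"
  shows "(\<Sum>\<^sub>\<infinity>k\<in>A. P s k * g k) = (\<Sum>k\<in>A \<inter> H s. P s k * g k)"
proof -
  have "(\<Sum>\<^sub>\<infinity>k\<in>A. P s k * g k) = (\<Sum>\<^sub>\<infinity>k\<in>A \<inter> H s. P s k * g k)"
  proof (rule infsum_cong_neutral)
    fix x assume "x \<in> A - A \<inter> H s"
    then have "P s x = 0" using P_out[of x s] memS[of x] assms by blast
    then show "P s x * g x = 0" by simp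
  qed auto
  also have "\<dots> = (\<Sum>k\<in>A \<inter> H s. P s k * g k)"
    using finH by simp
  finally show ?thesis .
qed

lemma ss_in: "i \<in> src M \<Longrightarrow> x \<in> src M \<Longrightarrow> ss i x \<in> S"
  by (auto simp: ss_def mem_diag mem_off)

lemma sf_in: "i \<noteq> j \<Longrightarrow> (i,j,d) \<in> S \<Longrightarrow> x \<in> src M \<Longrightarrow> (x \<noteq> i \<or> Q i i > 0) \<Longrightarrow> sf i j d x \<in> S"
  by (auto simp: sf_def mem_diag mem_off)

lemma ss_H: "x \<in> src M \<Longrightarrow> ss i x \<in> H (i,j,d)" by (auto simp: H_def)
lemma sf_H: "x \<in> src M \<Longrightarrow> sf i j d x \<in> H (i,j,d)" by (auto simp: H_def)

lemma inner:
  assumes s: "(i,j,d) \<in> S" and x: "x \<in> src M"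
  shows "Q i x * (\<Sum>k\<in>S \<inter> H (i,j,d). w ps (i,j,d) x k) = Q i x"
proof (cases "i = j")
  case True
  have i: "i \<in> src M" using memS[OF s] by simp
  have "(\<Sum>k\<in>S \<inter> H (i,j,d). w ps (i,j,d) x k) = (\<Sum>k\<in>S \<inter> H (i,j,d). if k = ss i x then 1 else 0)"
    using True by (simp add: w_def)
  also have "\<dots> = 1" using ss_in[OF i x] ss_H[OF x] finH by (simp add: sum.delta)
  finally show ?thesis by simp
next
  case False
  have i: "i \<in> src M" using memS[OF s] by simp
  have "(\<Sum>k\<in>S \<inter> H (i,j,d). w ps (i,j,d) x k) =
     (\<Sum>k\<in>S \<inter> H (i,j,d). if k = ss i x then ps else 0) + (\<Sum>k\<in>S \<inter> H (i,j,d). if k = sf i j d x then 1 - ps else 0)"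
    using False by (simp add: w_def sum.distrib)
  also have "\<dots> = ps + (if sf i j d x \<in> S then 1 - ps else 0)"
    using ss_in[OF i x] ss_H[OF x] sf_H[OF x] finH by (simp add: sum.delta)
  finally have eq: "(\<Sum>k\<in>S \<inter> H (i,j,d). w ps (i,j,d) x k) = ps + (if sf i j d x \<in> S then 1 - ps else 0)" .
  show ?thesis
  proof (cases "sf i j d x \<in> S")
    case True
    then show ?thesis using eq by simp
  next
    case nin: False
    then have "x = i \<and> \<not> Q i i > 0" using sf_in[OF False s x] by blast
    then have "Q i x = 0" using Qnn[OF i i] by simp
    then show ?thesis by simp
  qed
qed

lemma rowsum:
  assumes s: "s \<in> S"
  shows "(\<Sum>k\<in>S \<inter> H s. P s k) = 1"
proof -
  obtain i j d where sd: "s = (i,j,d)" by (cases s) auto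
  have i: "i \<in> src M" using memS[OF s] sd by simp
  have "(\<Sum>k\<in>S \<inter> H s. P s k) = (\<Sum>k\<in>S \<inter> H s. \<Sum>x\<in>src M. Q i x * w ps s x k)"
  proof (rule sum.cong)
    fix k assume "k \<in> S \<inter> H s"
    then have "fst k \<in> src M" using memS by blast
    then show "P s k = (\<Sum>x\<in>src M. Q i x * w ps s x k)"
      using P_sum[of "src M" k Q ps s] sd by simp
  qed simp
  also have "\<dots> = (\<Sum>x\<in>src M. Q i x * (\<Sum>k\<in>S \<inter> H s. w ps s x k))"
    by (subst sum.swap) (simp add: sum_distrib_left)
  also have "\<dots> = (\<Sum>x\<in>src M. Q i x)"
  proof (rule sum.cong)
    fix x assume "x \<in> src M"
    then show "Q i x * (\<Sum>k\<in>S \<inter> H s. w ps s x k) = Q i x"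
      using inner[of i j d x] s sd by simp
  qed simp
  also have "\<dots> = 1" using Qsum[OF i] .
  finally show ?thesis .
qed

end


context mc begin

lemma exists_pos: "i \<in> src M \<Longrightarrow> \<exists>b\<in>src M. Q i b > 0"
proof (rule ccontr)
  assume i: "i \<in> src M" and "\<not> (\<exists>b\<in>src M. Q i b > 0)"
  then have "(\<Sum>j\<in>src M. Q i j) \<le> 0" by (intro sum_nonpos) auto
  then show False using Qsum[OF i] by simp
qed

definition qmin :: real where
  "qmin = Min {Q a b | a b. a \<in> src M \<and> b \<in> src M \<and> Q a b > 0}"

definition dl :: real where "dl = qmin * min ps (1 - ps)"

lemma Qset_fin: "finite {Q a b | a b. a \<in> src M \<and> b \<in> src M \<and> Q a b > 0}"
proof -
  have "{Q a b | a b. a \<in> src M \<and> b \<in> src M \<and> Q a b > 0} \<subseteq> (\<lambda>(a,b). Q a b) ` (src M \<times> src M)"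
    by auto
  then show ?thesis by (rule finite_subset) simp
qed

lemma Q_le1: "a \<in> src M \<Longrightarrow> b \<in> src M \<Longrightarrow> Q a b \<le> 1"
  using member_le_sum[of b "src M" "Q a"] Qnn Qsum by auto

lemma qmin_le: "a \<in> src M \<Longrightarrow> b \<in> src M \<Longrightarrow> Q a b > 0 \<Longrightarrow> qmin \<le> Q a b"
  unfolding qmin_def by (rule Min_le[OF Qset_fin]) blast

lemma qmin_pos: "qmin > 0"
proof -
  have "1 \<in> src M" using M1 by (simp add: src_def)
  then obtain b where "b \<in> src M" "Q 1 b > 0" using exists_pos by blast
  then have ne: "{Q a b | a b. a \<in> src M \<and> b \<in> src M \<and> Q a b > 0} \<noteq> {}" using \<open>1 \<in> src M\<close> by blast
  show ?thesis unfolding qmin_def using Min_in[OF Qset_fin ne] by auto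
qed

lemma dl_pos: "dl > 0" using qmin_pos ps0 ps1 by (simp add: dl_def)

lemma dl_le: "a \<in> src M \<Longrightarrow> b \<in> src M \<Longrightarrow> Q a b > 0 \<Longrightarrow> dl \<le> Q a b * ps \<and> dl \<le> Q a b * (1 - ps) \<and> dl \<le> Q a b"
proof -
  assume ab: "a \<in> src M" "b \<in> src M" "Q a b > 0"
  have q: "qmin \<le> Q a b" using qmin_le ab by blast
  have m: "min ps (1 - ps) \<le> ps" "min ps (1 - ps) \<le> 1 - ps" "min ps (1-ps) \<le> 1" "0 \<le> min ps (1 - ps)"
    using ps0 ps1 by auto
  have "dl \<le> Q a b * min ps (1 - ps)" unfolding dl_def using q m(4) by (simp add: mult_right_mono)
  moreover have "Q a b * min ps (1 - ps) \<le> Q a b * ps" using m(1) ab(3) by (simp add: mult_left_mono)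
  moreover have "Q a b * min ps (1 - ps) \<le> Q a b * (1 - ps)" using m(2) ab(3) by (simp add: mult_left_mono)
  moreover have "Q a b * min ps (1 - ps) \<le> Q a b" using m(3) ab(3) by (simp add: mult_left_le)
  ultimately show ?thesis by linarith
qed

lemma dl_le1: "dl \<le> 1"
proof -
  have "1 \<in> src M" using M1 by (simp add: src_def)
  then obtain b where "b \<in> src M" "Q 1 b > 0" using exists_pos by blast
  then show ?thesis using dl_le[of 1 b] Q_le1[of 1 b] \<open>1 \<in> src M\<close> by linarith
qed

definition stp :: "(state \<times> state) set" where
  "stp = {(s,t). s \<in> S \<and> t \<in> S \<and> P s t \<ge> dl}"

lemma mv_ss:
  assumes s: "(i,j,d) \<in> S" and x: "x \<in> src M" and q: "Q i x > 0"
  shows "((i,j,d), ss i x) \<in> stp"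
proof -
  have i: "i \<in> src M" using memS[OF s] by simp
  have "P (i,j,d) (ss i x) = Q i x * w ps (i,j,d) x (ss i x)" by (simp add: P_eq')
  moreover have "w ps (i,j,d) x (ss i x) \<ge> (if i = j then 1 else ps)"
    using ps0 ps1 by (auto simp: w_def)
  moreover have "dl \<le> Q i x * (if i = j then 1 else ps)" using dl_le[OF i x q] by auto
  ultimately have "dl \<le> P (i,j,d) (ss i x)"
    using mult_left_mono[of "if i = j then 1 else ps" "w ps (i,j,d) x (ss i x)" "Q i x"] q by linarith
  then show ?thesis using s ss_in[OF i x] by (simp add: stp_def)
qed

lemma mv_sf:
  assumes s: "(i,j,d) \<in> S" and ij: "i \<noteq> j" and x: "x \<in> src M" and q: "Q i x > 0"
  shows "((i,j,d), sf i j d x) \<in> stp"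
proof -
  have i: "i \<in> src M" using memS[OF s] by simp
  have "P (i,j,d) (sf i j d x) = Q i x * w ps (i,j,d) x (sf i j d x)" by (simp add: P_eq')
  moreover have "w ps (i,j,d) x (sf i j d x) \<ge> 1 - ps"
    using ps0 ps1 ij by (auto simp: w_def)
  moreover have "dl \<le> Q i x * (1 - ps)" using dl_le[OF i x q] by auto
  ultimately have "dl \<le> P (i,j,d) (sf i j d x)"
    using mult_left_mono[of "1 - ps" "w ps (i,j,d) x (sf i j d x)" "Q i x"] q by linarith
  moreover have "sf i j d x \<in> S" using sf_in[OF ij s x] q by auto
  ultimately show ?thesis using s by (simp add: stp_def)
qed

definition Qrel :: "(nat \<times> nat) set" where
  "Qrel = {(a,b). a \<in> src M \<and> b \<in> src M \<and> Q a b > 0}"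

lemma Q_path_n: "a \<in> src M \<Longrightarrow> nstep Q (src M) n a b > 0 \<Longrightarrow> (a,b) \<in> Qrel\<^sup>*"
proof (induction n arbitrary: a)
  case 0
  then show ?case by (auto split: if_splits)
next
  case (Suc n)
  have "(\<Sum>k\<in>src M. Q a k * nstep Q (src M) n k b) > 0" using Suc.prems by simp
  then obtain k where k: "k \<in> src M" "Q a k * nstep Q (src M) n k b > 0"
    by (metis (no_types, lifting) not_le sum_nonpos)
  have "Q a k \<ge> 0" using Qnn Suc.prems(1) k(1) by blast
  then have "Q a k > 0" "nstep Q (src M) n k b > 0" using k(2)
    by (auto simp: zero_less_mult_iff)
  then have "(a,k) \<in> Qrel" using Suc.prems(1) k(1) by (simp add: Qrel_def)
  moreover have "(k,b) \<in> Qrel\<^sup>*" using Suc.IH k(1) \<open>nstep Q (src M) n k b > 0\<close> by blast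
  ultimately show ?case by (rule converse_rtrancl_into_rtrancl)
qed

lemma Q_path: "a \<in> src M \<Longrightarrow> b \<in> src M \<Longrightarrow> (a,b) \<in> Qrel\<^sup>*"
  using irr Q_path_n unfolding irreducible_on_def by blast

lemma sf_form: "sf i j d x = (x, j, snd (snd (sf i j d x)))"
  by (auto simp: sf_def)

lemma reachA:
  assumes "(x,j) \<in> Qrel\<^sup>*"
  shows "(x,j,d) \<in> S \<Longrightarrow> ((x,j,d),(j,j,0)) \<in> stp\<^sup>*"
  using assms
proof (induction arbitrary: d rule: converse_rtrancl_induct)
  case base
  then show ?case using mem_diag by auto
next
  case (step x y)
  show ?case
  proof (cases "x = j")
    case True
    then show ?thesis using step.prems mem_diag by auto
  next
    case False
    have xy: "x \<in> src M" "y \<in> src M" "Q x y > 0" using step.hyps(1) by (auto simp: Qrel_def)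
    have m: "((x,j,d), sf x j d y) \<in> stp" using mv_sf[OF step.prems False xy(2,3)] .
    then have "sf x j d y \<in> S" by (simp add: stp_def)
    then have "(sf x j d y, (j,j,0)) \<in> stp\<^sup>*" using step.IH sf_form[of x j d y] by metis
    then show ?thesis by (rule converse_rtrancl_into_rtrancl[OF m])
  qed
qed

lemma reachC:
  assumes s: "(b,j,d) \<in> S"
  shows "((b,j,d),(b,b,0)) \<in> stp\<^sup>*"
proof (cases "j = b")
  case True
  then show ?thesis using s mem_diag by auto
next
  case False
  have b: "b \<in> src M" using memS[OF s] by simp
  obtain z where z: "z \<in> src M" "Q b z > 0" using exists_pos[OF b] by blast
  have m: "((b,j,d), ss b z) \<in> stp" using mv_ss[OF s z] .
  show ?thesis
  proof (cases "z = b")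
    case True
    then show ?thesis using m by (simp add: ss_def)
  next
    case False
    then have "ss b z = (z,b,1)" by (simp add: ss_def)
    moreover have "(z,b,1) \<in> S" using False b z by (simp add: mem_off)
    ultimately have "(ss b z, (b,b,0)) \<in> stp\<^sup>*" using reachA Q_path[OF z(1) b] by simp
    then show ?thesis by (rule converse_rtrancl_into_rtrancl[OF m])
  qed
qed

lemma reachE:
  assumes "(a,b) \<in> Qrel\<^sup>*" and s: "s \<in> S" "fst s = a"
  shows "\<exists>t. fst t = b \<and> t \<in> S \<and> (s,t) \<in> stp\<^sup>*"
  using assms(1)
proof (induction rule: rtrancl_induct)
  case base
  then show ?case using s by blast
next
  case (step y z)
  then obtain t where t: "fst t = y" "t \<in> S" "(s,t) \<in> stp\<^sup>*" by blast
  obtain j d where td: "t = (y,j,d)" using t(1) by (cases t) auto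
  have yz: "y \<in> src M" "z \<in> src M" "Q y z > 0" using step.hyps(2) by (auto simp: Qrel_def)
  have "(t, ss y z) \<in> stp" using mv_ss[of y j d z] t(2) td yz by simp
  then have "(s, ss y z) \<in> stp\<^sup>*" using t(3) by simp
  moreover have "ss y z \<in> S" using ss_in yz by simp
  ultimately show ?case by (intro exI[of _ "ss y z"]) simp
qed

lemma reach_diag:
  assumes s: "s \<in> S" and b: "b \<in> src M"
  shows "(s,(b,b,0)) \<in> stp\<^sup>*"
proof -
  obtain t where t: "fst t = b" "t \<in> S" "(s,t) \<in> stp\<^sup>*"
    using reachE[OF Q_path[OF _ b] s] memS[OF s] by blast
  obtain j d where "t = (b,j,d)" using t(1) by (cases t) auto
  then have "(t,(b,b,0)) \<in> stp\<^sup>*" using reachC t(2) by simp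
  then show ?thesis using t(3) by simp
qed

lemma reachF1:
  assumes "(j,i) \<in> Qrel\<^sup>*" and j: "j \<in> src M"
  shows "i = j \<or> ((j,j,0),(i,j,1)) \<in> stp\<^sup>*"
  using assms(1)
proof (induction rule: rtrancl_induct)
  case base
  then show ?case by simp
next
  case (step y z)
  have yz: "y \<in> src M" "z \<in> src M" "Q y z > 0" using step.hyps(2) by (auto simp: Qrel_def)
  show ?case
  proof (cases "z = j")
    case True then show ?thesis by simp
  next
    case zj: False
    show ?thesis
    proof (cases "y = j")
      case True
      have "((j,j,0), ss j z) \<in> stp" using mv_ss[of j j 0 z] j yz True mem_diag by simp
      then show ?thesis using zj by (simp add: ss_def)
    next
      case yj: False
      then have r: "((j,j,0),(y,j,1)) \<in> stp\<^sup>*" using step.IH by simp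
      show ?thesis
      proof (cases "z = y")
        case True then show ?thesis using r by simp
      next
        case False
        have "(y,j,1) \<in> S" using yj yz j by (simp add: mem_off)
        then have "((y,j,1), sf y j 1 z) \<in> stp" using mv_sf[OF _ yj yz(2,3)] by simp
        then have "((y,j,1),(z,j,1)) \<in> stp" using False zj by (simp add: sf_def)
        then show ?thesis using r by (meson rtrancl.rtrancl_into_rtrancl)
      qed
    qed
  qed
qed

lemma reachF2:
  assumes "i \<noteq> j" "(i,j,Suc d) \<in> S"
  shows "((i,j,1),(i,j,Suc d)) \<in> stp\<^sup>*"
  using assms(2)
proof (induction d)
  case 0 then show ?case by simp
next
  case (Suc d)
  have q: "Q i i > 0" and i: "i \<in> src M" using Suc.prems assms(1) by (auto simp: mem_off)
  have S1: "(i,j,Suc d) \<in> S" using Suc.prems assms(1) q by (simp add: mem_off)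
  have "((i,j,Suc d), sf i j (Suc d) i) \<in> stp" using mv_sf[OF S1 assms(1) i q] .
  then have "((i,j,Suc d),(i,j,Suc (Suc d))) \<in> stp" by (simp add: sf_def)
  then show ?case using Suc.IH[OF S1] by simp
qed

lemma reach_all:
  assumes s: "s \<in> S" and t: "t \<in> S"
  shows "(s,t) \<in> stp\<^sup>*"
proof -
  obtain i j d where td: "t = (i,j,d)" by (cases t) auto
  show ?thesis
  proof (cases "i = j")
    case True
    then show ?thesis using reach_diag[OF s] t td mem_diag by auto
  next
    case False
    have ij: "i \<in> src M" "j \<in> src M" "d \<ge> 1" using t td False by (auto simp: mem_off)
    obtain d' where d': "d = Suc d'" using ij(3) by (cases d) auto
    have r1: "(s,(j,j,0)) \<in> stp\<^sup>*" using reach_diag[OF s ij(2)] .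
    have r2: "((j,j,0),(i,j,1)) \<in> stp\<^sup>*" using reachF1[OF Q_path[OF ij(2) ij(1)] ij(2)] False by simp
    have r3: "((i,j,1),(i,j,d)) \<in> stp\<^sup>*" using reachF2[OF False] t td d' by simp
    show ?thesis using r1 r2 r3 td by simp
  qed
qed

definition Fs :: "state set" where "Fs = S \<inter> {t. snd (snd t) \<le> 1}"

lemma fin_Fs: "finite Fs"
proof -
  have "Fs \<subseteq> src M \<times> src M \<times> {0,1}"
  proof
    fix t assume t: "t \<in> Fs"
    obtain a b c where tt: "t = (a,b,c)" by (cases t) auto
    have "a \<in> src M" "b \<in> src M" "c \<le> 1" using t memS[of t] tt by (auto simp: Fs_def)
    then show "t \<in> src M \<times> src M \<times> {0,1}" using tt by auto
  qed
  then show ?thesis by (rule finite_subset) simp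
qed

lemma step_to_F: "s \<in> S \<Longrightarrow> \<exists>t\<in>Fs. (s,t) \<in> stp"
proof -
  assume s: "s \<in> S"
  obtain i j d where sd: "s = (i,j,d)" by (cases s) auto
  have i: "i \<in> src M" using memS[OF s] sd by simp
  obtain z where z: "z \<in> src M" "Q i z > 0" using exists_pos[OF i] by blast
  have "(s, ss i z) \<in> stp" using mv_ss[of i j d z] s sd z by simp
  moreover have "ss i z \<in> Fs" using ss_in[OF i z(1)] by (auto simp: Fs_def ss_def)
  ultimately show ?thesis by blast
qed

end


context mc begin

fun surv :: "state \<Rightarrow> nat \<Rightarrow> state \<Rightarrow> real" where
  "surv t 0 s = 1"
| "surv t (Suc n) s = (\<Sum>\<^sub>\<infinity>k\<in>S - {t}. P s k * surv t n k)"

lemma surv_fin: "surv t (Suc n) s = (\<Sum>k\<in>(S - {t}) \<inter> H s. P s k * surv t n k)"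
  using infsum_red[of "S - {t}" s "surv t n"] by simp

declare surv.simps(2)[simp del]

lemma sum_P_le1: "s \<in> S \<Longrightarrow> (\<Sum>k\<in>(S - {t}) \<inter> H s. P s k) \<le> 1"
proof -
  assume s: "s \<in> S"
  have "(\<Sum>k\<in>(S - {t}) \<inter> H s. P s k) \<le> (\<Sum>k\<in>S \<inter> H s. P s k)"
    by (rule sum_mono2) (use finH P_nn s in auto)
  then show ?thesis using rowsum[OF s] by simp
qed

lemma surv_bounds: "s \<in> S \<Longrightarrow> 0 \<le> surv t n s \<and> surv t n s \<le> 1"
proof (induction n arbitrary: s)
  case 0
  then show ?case by simp
next
  case (Suc n)
  have nn: "0 \<le> surv t (Suc n) s"
    unfolding surv_fin by (rule sum_nonneg) (use Suc P_nn in auto)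
  have "surv t (Suc n) s \<le> (\<Sum>k\<in>(S - {t}) \<inter> H s. P s k)"
    unfolding surv_fin
  proof (rule sum_mono)
    fix k assume k: "k \<in> (S - {t}) \<inter> H s"
    then show "P s k * surv t n k \<le> P s k"
      using Suc.IH[of k] P_nn[OF Suc.prems, of k] by (simp add: mult_left_le)
  qed
  then show ?case using nn sum_P_le1[OF Suc.prems, of t] by simp
qed

lemma surv_mult:
  assumes c: "\<And>k. k \<in> S \<Longrightarrow> surv t m k \<le> c"
  shows "s \<in> S \<Longrightarrow> surv t (n + m) s \<le> c * surv t n s"
proof (induction n arbitrary: s)
  case 0
  then show ?case using c by simp
next
  case (Suc n)
  have "surv t (Suc n + m) s = (\<Sum>k\<in>(S - {t}) \<inter> H s. P s k * surv t (n + m) k)"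
    using surv_fin[of t "n + m" s] by simp
  also have "\<dots> \<le> (\<Sum>k\<in>(S - {t}) \<inter> H s. P s k * (c * surv t n k))"
  proof (rule sum_mono)
    fix k assume k: "k \<in> (S - {t}) \<inter> H s"
    then show "P s k * surv t (n + m) k \<le> P s k * (c * surv t n k)"
      using Suc.IH[of k] P_nn[OF Suc.prems, of k] by (simp add: mult_left_mono)
  qed
  also have "\<dots> = c * surv t (Suc n) s"
    unfolding surv_fin by (simp add: sum_distrib_left mult_ac)
  finally show ?case .
qed

lemma surv_mono: "s \<in> S \<Longrightarrow> surv t (Suc n) s \<le> surv t n s"
proof -
  assume s: "s \<in> S"
  have "\<And>k. k \<in> S \<Longrightarrow> surv t 1 k \<le> 1" using surv_bounds by blast
  from surv_mult[of t 1 1, OF this s, of n] show ?thesis by simp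
qed

lemma surv_antimono: "s \<in> S \<Longrightarrow> n \<le> m \<Longrightarrow> surv t m s \<le> surv t n s"
proof (induction m)
  case 0 then show ?case by simp
next
  case (Suc m)
  show ?case
  proof (cases "n = Suc m")
    case True then show ?thesis by simp
  next
    case False
    then have "surv t m s \<le> surv t n s" using Suc by simp
    then show ?thesis using surv_mono[OF Suc.prems(1), of t m] by simp
  qed
qed

lemma surv1: "s \<in> S \<Longrightarrow> t \<in> S \<Longrightarrow> surv t (Suc 0) s = 1 - P s t"
proof -
  assume s: "s \<in> S" and t: "t \<in> S"
  have "surv t (Suc 0) s = (\<Sum>k\<in>(S \<inter> H s) - {t}. P s k)"
  proof -
    have "(S - {t}) \<inter> H s = (S \<inter> H s) - {t}" by blast
    then show ?thesis using surv_fin[of t 0 s] by simp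
  qed
  also have "\<dots> = 1 - P s t"
  proof (cases "t \<in> H s")
    case True
    then show ?thesis using rowsum[OF s] t finH by (simp add: sum_diff1)
  next
    case False
    then have "P s t = 0" using P_out memS[OF t] by blast
    then show ?thesis using rowsum[OF s] False finH by (simp add: sum_diff1)
  qed
  finally show ?thesis .
qed

lemma surv_path:
  assumes t: "t \<in> S"
  shows "(s,t) \<in> stp ^^ Suc m \<Longrightarrow> surv t (Suc m) s \<le> 1 - dl ^ Suc m"
proof (induction m arbitrary: s)
  case 0
  then have "(s,t) \<in> stp" by simp
  then have "s \<in> S" "dl \<le> P s t" by (auto simp: stp_def)
  then show ?case using surv1[OF _ t] by simp
next
  case (Suc m)
  obtain k where k: "(s,k) \<in> stp" "(k,t) \<in> stp ^^ Suc m" using relpow_Suc_D2[OF Suc.prems] by blast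
  have s: "s \<in> S" and kS: "k \<in> S" and Pk: "dl \<le> P s k" using k(1) by (auto simp: stp_def)
  have dlm: "0 \<le> dl ^ Suc m" "dl ^ Suc m \<le> 1"
    using dl_pos apply simp
    by (rule power_le_one) (use dl_pos dl_le1 in auto)
  show ?case
  proof (cases "k = t")
    case True
    have "surv t (Suc (Suc m)) s \<le> surv t (Suc 0) s" using surv_antimono[OF s, of "Suc 0" "Suc (Suc m)" t] by simp
    also have "\<dots> \<le> 1 - dl" using surv1[OF s t] Pk True by simp
    also have "\<dots> \<le> 1 - dl ^ Suc (Suc m)"
      using mult_left_le[OF dlm(2), of dl] dl_pos by simp
    finally show ?thesis .
  next
    case False
    let ?A = "(S - {t}) \<inter> H s"
    have kA: "k \<in> ?A"
    proof -
      have "k \<in> H s" using P_out[of k s] memS[OF kS] Pk dl_pos by force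
      then show ?thesis using kS False by simp
    qed
    have IH: "surv t (Suc m) k \<le> 1 - dl ^ Suc m" using Suc.IH[OF k(2)] .
    have sb: "0 \<le> surv t (Suc m) k'" "surv t (Suc m) k' \<le> 1" if "k' \<in> S" for k'
      using surv_bounds[OF that] by auto
    have "surv t (Suc (Suc m)) s = (\<Sum>k'\<in>?A. P s k') - (\<Sum>k'\<in>?A. P s k' * (1 - surv t (Suc m) k'))"
      unfolding surv_fin by (simp add: sum_subtractf[symmetric] algebra_simps)
    also have "(\<Sum>k'\<in>?A. P s k' * (1 - surv t (Suc m) k')) \<ge> P s k * (1 - surv t (Suc m) k)"
      by (rule member_le_sum[OF kA]) (use P_nn[OF s] sb finH in \<open>auto\<close>)
    then have "(\<Sum>k'\<in>?A. P s k') - (\<Sum>k'\<in>?A. P s k' * (1 - surv t (Suc m) k')) \<le> 1 - P s k * (1 - surv t (Suc m) k)"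
      using sum_P_le1[OF s, of t] by linarith
    also have "P s k * (1 - surv t (Suc m) k) \<ge> dl * dl ^ Suc m"
      by (rule mult_mono) (use Pk IH dl_pos dlm in auto)
    then have "1 - P s k * (1 - surv t (Suc m) k) \<le> 1 - dl ^ Suc (Suc m)" by simp
    finally show ?thesis .
  qed
qed

end


context mc begin

lemma unif:
  assumes t: "t \<in> S"
  shows "\<exists>L \<epsilon>. L \<ge> 1 \<and> 0 < \<epsilon> \<and> \<epsilon> \<le> 1 \<and> (\<forall>s\<in>S. surv t L s \<le> 1 - \<epsilon>)"
proof -
  have "\<forall>f\<in>Fs. \<exists>n. (f,t) \<in> stp ^^ n"
  proof
    fix f assume "f \<in> Fs"
    then have "(f,t) \<in> stp\<^sup>*" using reach_all t by (simp add: Fs_def)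
    then show "\<exists>n. (f,t) \<in> stp ^^ n" using rtrancl_power by blast
  qed
  then obtain nf where nf: "\<And>f. f \<in> Fs \<Longrightarrow> (f,t) \<in> stp ^^ nf f" by metis
  define L where "L = Suc (Max (nf ` Fs))"
  have "\<forall>s\<in>S. surv t L s \<le> 1 - dl ^ L"
  proof
    fix s assume s: "s \<in> S"
    obtain f where f: "f \<in> Fs" "(s,f) \<in> stp" using step_to_F[OF s] by blast
    have p: "(s,t) \<in> stp ^^ Suc (nf f)" using f nf[OF f(1)] by (meson relpow_Suc_I2)
    have le: "Suc (nf f) \<le> L" unfolding L_def using fin_Fs f(1) by simp
    have "surv t L s \<le> surv t (Suc (nf f)) s" using surv_antimono[OF s le] .
    also have "\<dots> \<le> 1 - dl ^ Suc (nf f)" using surv_path[OF t p] .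
    also have "\<dots> \<le> 1 - dl ^ L" using power_decreasing[OF le, of dl] dl_pos dl_le1 by simp
    finally show "surv t L s \<le> 1 - dl ^ L" .
  qed
  moreover have "0 < dl ^ L" "dl ^ L \<le> 1" using dl_pos dl_le1 by (auto simp: power_le_one)
  moreover have "L \<ge> 1" by (simp add: L_def)
  ultimately show ?thesis by blast
qed

lemma geo:
  assumes t: "t \<in> S"
  shows "\<exists>C \<rho>. 0 \<le> C \<and> 0 < \<rho> \<and> \<rho> < 1 \<and> (\<forall>s\<in>S. \<forall>n. surv t n s \<le> C * \<rho> ^ n)"
proof -
  obtain L \<epsilon> where L: "L \<ge> 1" "0 < \<epsilon>" "\<epsilon> \<le> 1" "\<forall>s\<in>S. surv t L s \<le> 1 - \<epsilon>"
    using unif[OF t] by blast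
  define r where "r = max (1 - \<epsilon>) (1/2)"
  have r: "0 < r" "r < 1" "1 - \<epsilon> \<le> r" using L by (auto simp: r_def)
  have blk: "surv t (j * L) s \<le> r ^ j" if s: "s \<in> S" for j s
    using s
  proof (induction j arbitrary: s)
    case 0 then show ?case by simp
  next
    case (Suc j)
    have "surv t (j * L + L) s \<le> (1 - \<epsilon>) * surv t (j * L) s"
      by (rule surv_mult) (use L(4) Suc.prems in auto)
    also have "\<dots> \<le> r * r ^ j"
      by (rule mult_mono) (use r Suc surv_bounds[of s t] L in auto)
    finally show ?case by (simp add: add.commute)
  qed
  define \<rho> where "\<rho> = root L r"
  have Lp: "0 < L" using L by simp
  have rho: "0 < \<rho>" "\<rho> < 1" "\<rho> ^ L = r"
    using r Lp by (auto simp: \<rho>_def real_root_gt_zero real_root_lt_1_iff real_root_pow_pos)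
  have "\<forall>s\<in>S. \<forall>n. surv t n s \<le> (1 / r) * \<rho> ^ n"
  proof (intro ballI allI)
    fix s n assume s: "s \<in> S"
    define q where "q = n div L"
    have n: "n = q * L + n mod L" by (simp add: q_def)
    have qn: "q * L \<le> n" using n by linarith
    have "surv t n s \<le> surv t (q * L) s" using surv_antimono[OF s qn] .
    also have "\<dots> \<le> r ^ q" using blk[OF s] .
    also have "r ^ q = (r ^ q * r) / r" using r by simp
    also have "r ^ q * r \<le> \<rho> ^ n"
    proof -
      have "\<rho> ^ n = \<rho> ^ (L * q) * \<rho> ^ (n mod L)" using n by (metis mult.commute power_add)
      also have "\<rho> ^ (L * q) = r ^ q" using rho by (simp add: power_mult)
      finally have e: "\<rho> ^ n = r ^ q * \<rho> ^ (n mod L)" .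
      have "\<rho> ^ L \<le> \<rho> ^ (n mod L)"
        using power_decreasing[of "n mod L" L \<rho>] rho Lp by simp
      then have "r \<le> \<rho> ^ (n mod L)" using rho by simp
      then show ?thesis unfolding e using r by (simp add: mult_left_mono)
    qed
    then have "(r ^ q * r) / r \<le> \<rho> ^ n / r" using r by (simp add: pos_le_divide_eq)
    finally show "surv t n s \<le> (1 / r) * \<rho> ^ n" by simp
  qed
  then show ?thesis using rho r by (intro exI[of _ "1/r"] exI[of _ \<rho>]) auto
qed

lemma fp_surv:
  assumes t: "t \<in> S"
  shows "s \<in> S \<Longrightarrow> first_passage P S (Suc n) s t = surv t n s - surv t (Suc n) s"
proof (induction n arbitrary: s)
  case 0
  then show ?case using surv1[OF _ t] by simp
next
  case (Suc n)
  have "first_passage P S (Suc (Suc n)) s t = (\<Sum>\<^sub>\<infinity>k\<in>S - {t}. P s k * first_passage P S (Suc n) k t)"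
    by simp
  also have "\<dots> = (\<Sum>k\<in>(S - {t}) \<inter> H s. P s k * first_passage P S (Suc n) k t)"
    using infsum_red[of "S - {t}" s "\<lambda>k. first_passage P S (Suc n) k t"] by simp
  also have "\<dots> = (\<Sum>k\<in>(S - {t}) \<inter> H s. P s k * surv t n k - P s k * surv t (Suc n) k)"
    by (rule sum.cong) (use Suc.IH in \<open>auto simp: right_diff_distrib\<close>)
  also have "\<dots> = surv t (Suc n) s - surv t (Suc (Suc n)) s"
    unfolding surv_fin[of t n s] surv_fin[of t "Suc n" s] by (simp add: sum_subtractf)
  finally show ?case .
qed

lemma summable_n_pow:
  fixes \<rho> :: real
  assumes "0 < \<rho>" "\<rho> < 1"
  shows "summable (\<lambda>n. real n * \<rho> ^ n)"
proof -
  have "summable (\<lambda>n. diffs (\<lambda>_. 1::real) n * \<rho> ^ n)"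
    by (rule termdiff_converges[of \<rho> 1]) (use assms in auto)
  then have s: "summable (\<lambda>n. real (Suc n) * \<rho> ^ n)" by (simp add: diffs_def)
  show ?thesis
    by (rule summable_comparison_test'[OF s, of 0]) (use assms in auto)
qed

lemma main_pair:
  assumes s: "s \<in> S" and t: "t \<in> S"
  shows "hitting_prob P S s t = 1 \<and> expected_passage_time P S s t < top"
proof -
  obtain C \<rho> where g: "0 \<le> C" "0 < \<rho>" "\<rho> < 1" "\<forall>s\<in>S. \<forall>n. surv t n s \<le> C * \<rho> ^ n"
    using geo[OF t] by blast
  define f where "f n = first_passage P S n s t" for n
  have fS: "f (Suc n) = surv t n s - surv t (Suc n) s" for n
    using fp_surv[OF t s] by (simp add: f_def)
  have f0: "f 0 = 0" by (simp add: f_def)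
  have fnn: "0 \<le> f n" for n
    by (cases n) (use f0 fS surv_mono[OF s] in auto)
  have fle: "f n \<le> (C / \<rho>) * \<rho> ^ n" for n
  proof (cases n)
    case 0 then show ?thesis using f0 g by simp
  next
    case (Suc m)
    have "f n \<le> surv t m s" using fS Suc surv_bounds[OF s, of t "Suc m"] by simp
    also have "\<dots> \<le> C * \<rho> ^ m" using g s by blast
    also have "\<dots> = (C / \<rho>) * \<rho> ^ n" using Suc g by simp
    finally show ?thesis .
  qed
  have lim0: "(\<lambda>n. surv t n s) \<longlonglongrightarrow> 0"
  proof (rule tendsto_sandwich[of "\<lambda>_. 0" _ _ "\<lambda>n. C * \<rho> ^ n"])
    show "\<forall>\<^sub>F n in sequentially. 0 \<le> surv t n s" using surv_bounds[OF s] by simp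
    show "\<forall>\<^sub>F n in sequentially. surv t n s \<le> C * \<rho> ^ n" using g s by simp
    show "(\<lambda>n. C * \<rho> ^ n) \<longlonglongrightarrow> 0"
      using g by (intro tendsto_mult_right_zero LIMSEQ_power_zero) auto
  qed simp
  have "(\<lambda>n. f (Suc n)) sums 1"
  proof -
    have "(\<lambda>m. \<Sum>n<m. f (Suc n)) = (\<lambda>m. 1 - surv t m s)"
      using sum_lessThan_telescope'[of "\<lambda>n. surv t n s"] by (simp add: fS)
    moreover have "(\<lambda>m. 1 - surv t m s) \<longlonglongrightarrow> 1 - 0"
      by (intro tendsto_diff tendsto_const lim0)
    ultimately show ?thesis unfolding sums_def by simp
  qed
  then have fs: "f sums 1" using sums_Suc_iff[of f 1] f0 by simp
  have hp: "hitting_prob P S s t = 1"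
    unfolding hitting_prob_def f_def[symmetric]
    using suminf_ennreal2[OF fnn sums_summable[OF fs]] sums_unique[OF fs] by simp
  have sm: "summable (\<lambda>n. real n * f n)"
  proof (rule summable_comparison_test'[of "\<lambda>n. (C / \<rho>) * (real n * \<rho> ^ n)" 0])
    show "summable (\<lambda>n. (C / \<rho>) * (real n * \<rho> ^ n))"
      using summable_n_pow[OF g(2,3)] by (rule summable_mult)
    fix n :: nat
    have "real n * f n \<le> real n * ((C / \<rho>) * \<rho> ^ n)" using mult_left_mono[OF fle[of n], of "real n"] by simp
    then show "norm (real n * f n) \<le> (C / \<rho>) * (real n * \<rho> ^ n)"
      using fnn[of n] by (simp add: mult_ac)
  qed
  have "(\<Sum>n. ennreal (real n * f n)) = ennreal (\<Sum>n. real n * f n)"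
    by (rule suminf_ennreal2) (use fnn sm in auto)
  then have "expected_passage_time P S s t = ennreal (\<Sum>n. real n * f n)"
    unfolding expected_passage_time_def f_def[symmetric] using hp by simp
  then show ?thesis using hp by simp
qed

lemma nstep_nn: "s \<in> S \<Longrightarrow> 0 \<le> nstep P S n s t"
proof (induction n arbitrary: s)
  case 0 then show ?case by simp
next
  case (Suc n)
  have "nstep P S (Suc n) s t = (\<Sum>k\<in>S \<inter> H s. P s k * nstep P S n k t)"
    using infsum_red[of S s "\<lambda>k. nstep P S n k t"] by simp
  also have "\<dots> \<ge> 0" by (rule sum_nonneg) (use Suc P_nn in auto)
  finally show ?case .
qed

lemma nstep_pos: "(s,t) \<in> stp ^^ n \<Longrightarrow> s \<in> S \<Longrightarrow> 0 < nstep P S n s t"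
proof (induction n arbitrary: s)
  case 0 then show ?case by simp
next
  case (Suc n)
  obtain k where k: "(s,k) \<in> stp" "(k,t) \<in> stp ^^ n" using relpow_Suc_D2[OF Suc.prems(1)] by blast
  have kS: "k \<in> S" and Pk: "dl \<le> P s k" using k(1) by (auto simp: stp_def)
  have kH: "k \<in> H s" using P_out[of k s] memS[OF kS] Pk dl_pos by force
  have pos: "0 < P s k * nstep P S n k t"
    using Suc.IH[OF k(2) kS] Pk dl_pos by simp
  have "nstep P S (Suc n) s t = (\<Sum>k\<in>S \<inter> H s. P s k * nstep P S n k t)"
    using infsum_red[of S s "\<lambda>k. nstep P S n k t"] by simp
  also have "\<dots> \<ge> P s k * nstep P S n k t"
    by (rule member_le_sum) (use kS kH finH Suc.prems(2) P_nn nstep_nn in \<open>auto intro!: mult_nonneg_nonneg\<close>)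
  finally show ?case using pos by linarith
qed

lemma irreducible: "irreducible_on P S"
  unfolding irreducible_on_def
proof (intro ballI)
  fix s t assume s: "s \<in> S" and t: "t \<in> S"
  obtain n where "(s,t) \<in> stp ^^ n" using reach_all[OF s t] rtrancl_power by blast
  then show "\<exists>n. 0 < nstep P S n s t" using nstep_pos s by blast
qed

end

theorem lemma2:
  fixes M :: nat and Q :: "nat \<Rightarrow> nat \<Rightarrow> real" and ps :: real
  assumes "M \<ge> 1"
    and "stochastic_on Q (src M)"
    and "irreducible_on Q (src M)"
    and "X_ap M Q \<noteq> {}"
    and "0 < ps" and "ps < 1"
  shows "irreducible_on (trans_always Q ps) (state_space M Q)
       \<and> positive_recurrent_on (trans_always Q ps) (state_space M Q)
       \<and> (\<forall>s\<in>state_space M Q. \<forall>s'\<in>state_space M Q.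
            expected_passage_time (trans_always Q ps) (state_space M Q) s s' < top)"
proof -
  interpret mc M Q ps using assms by unfold_locales
  show ?thesis
    using irreducible main_pair
    by (auto simp: positive_recurrent_on_def positive_recurrent_state_def)
qed

end
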